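(* Let $\mathcal{C}$ be a small elegant Reedy category, with face maps the morphisms of $\mathcal{C}^+$ and degeneracy maps the morphisms of $\mathcal{C}^-$. Assume the following for every face map $f\colon a\to c$ and every morphism $g\colon b\to c$ of $\mathcal{C}$: - a pullback of $f$ along $g$ exists in $\mathcal{C}$; - in this pullback square, the base change of $f$ along $g$ is a face map; - the base change of $g$ along $f$ is a face map if $g$ is a face map, and a degeneracy map if $g$ is a degeneracy map. Then the functor $\operatorname{colim}\colon \widehat{\mathcal{C}}\to\mathbf{Set}$ preserves monomorphisms.
   Context: A Reedy category is a category $\mathcal{C}$ with a degree function on objects and wide subcategories $\mathcal{C}^+$ (face maps, which raise degree unless identities) and $\mathcal{C}^-$ (degeneracy maps, which lower degree unless identities), such that every morphism factors uniquely as a degeneracy map followed by a face map. It is elegant (in the sense of Bergner–Rezk) if for every presheaf $X$ on $\mathcal{C}$ and every $x\in X(r)$ there is a unique pair $(\sigma\colon r\to s,\ y\in X(s))$ with $\sigma$ a degeneracy map, $y$ nondegenerate and $x=\sigma^* y$; here $y$ is nondegenerate if it is not of the form $\tau^*z$ for a non-identity degeneracy map $\tau$. $\widehat{\mathcal{C}}$ denotes presheaves of sets on $\mathcal{C}$. The colimit of a presheaf is the set of connected components of its category of elements. *)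

theory Defs
  imports Main
begin

text \<open>A small category: a set of objects and a set of arrows (inside ambient types),
  domain, codomain, identities and composition. Comp g f is g after f
  (defined when Cod f = Dom g).\<close>

record ('o, 'm) cat =
  Obj  :: "'o set"
  Arr  :: "'m set"
  Dom  :: "'m \<Rightarrow> 'o"
  Cod  :: "'m \<Rightarrow> 'o"
  Idm  :: "'o \<Rightarrow> 'm"
  Comp :: "'m \<Rightarrow> 'm \<Rightarrow> 'm"

definition is_category :: "('o, 'm) cat \<Rightarrow> bool" where
  "is_category C \<longleftrightarrow>
     (\<forall>f\<in>Arr C. Dom C f \<in> Obj C \<and> Cod C f \<in> Obj C) \<and>
     (\<forall>a\<in>Obj C. Idm C a \<in> Arr C \<and> Dom C (Idm C a) = a \<and> Cod C (Idm C a) = a) \<and>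
     (\<forall>f\<in>Arr C. \<forall>g\<in>Arr C. Cod C f = Dom C g \<longrightarrow>
         Comp C g f \<in> Arr C \<and> Dom C (Comp C g f) = Dom C f \<and> Cod C (Comp C g f) = Cod C g) \<and>
     (\<forall>f\<in>Arr C. Comp C (Idm C (Cod C f)) f = f \<and> Comp C f (Idm C (Dom C f)) = f) \<and>
     (\<forall>f\<in>Arr C. \<forall>g\<in>Arr C. \<forall>h\<in>Arr C. Cod C f = Dom C g \<longrightarrow> Cod C g = Dom C h \<longrightarrow>
         Comp C h (Comp C g f) = Comp C (Comp C h g) f)"

definition wide_subcat :: "('o, 'm) cat \<Rightarrow> 'm set \<Rightarrow> bool" where
  "wide_subcat C S \<longleftrightarrow> S \<subseteq> Arr C \<and> (\<forall>a\<in>Obj C. Idm C a \<in> S) \<and>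
     (\<forall>f\<in>S. \<forall>g\<in>S. Cod C f = Dom C g \<longrightarrow> Comp C g f \<in> S)"

text \<open>Reedy structure: degree function deg (valued in a well-order), face maps Fp
  (the arrows of C^+) and degeneracy maps Fm (the arrows of C^-).\<close>
definition is_reedy :: "('o, 'm) cat \<Rightarrow> ('o \<Rightarrow> 'd::wellorder) \<Rightarrow> 'm set \<Rightarrow> 'm set \<Rightarrow> bool" where
  "is_reedy C deg Fp Fm \<longleftrightarrow> is_category C \<and> wide_subcat C Fp \<and> wide_subcat C Fm \<and>
     (\<forall>f\<in>Fp. f \<noteq> Idm C (Dom C f) \<longrightarrow> deg (Dom C f) < deg (Cod C f)) \<and>
     (\<forall>f\<in>Fm. f \<noteq> Idm C (Dom C f) \<longrightarrow> deg (Cod C f) < deg (Dom C f)) \<and>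
     (\<forall>f\<in>Arr C. \<exists>!(s, t). s \<in> Fm \<and> t \<in> Fp \<and> Dom C s = Dom C f \<and> Cod C s = Dom C t \<and>
         Cod C t = Cod C f \<and> Comp C t s = f)"

definition is_presheaf :: "('o, 'm) cat \<Rightarrow> ('o \<Rightarrow> 'x set) \<Rightarrow> ('m \<Rightarrow> 'x \<Rightarrow> 'x) \<Rightarrow> bool" where
  "is_presheaf C X act \<longleftrightarrow>
     (\<forall>f\<in>Arr C. \<forall>x\<in>X (Cod C f). act f x \<in> X (Dom C f)) \<and>
     (\<forall>a\<in>Obj C. \<forall>x\<in>X a. act (Idm C a) x = x) \<and>
     (\<forall>f\<in>Arr C. \<forall>g\<in>Arr C. Cod C f = Dom C g \<longrightarrow>
        (\<forall>x\<in>X (Cod C g). act (Comp C g f) x = act f (act g x)))"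

definition is_nat_trans :: "('o, 'm) cat \<Rightarrow> ('o \<Rightarrow> 'x set) \<Rightarrow> ('m \<Rightarrow> 'x \<Rightarrow> 'x)
    \<Rightarrow> ('o \<Rightarrow> 'y set) \<Rightarrow> ('m \<Rightarrow> 'y \<Rightarrow> 'y) \<Rightarrow> ('o \<Rightarrow> 'x \<Rightarrow> 'y) \<Rightarrow> bool" where
  "is_nat_trans C X actX Y actY \<alpha> \<longleftrightarrow>
     (\<forall>a\<in>Obj C. \<forall>x\<in>X a. \<alpha> a x \<in> Y a) \<and>
     (\<forall>f\<in>Arr C. \<forall>x\<in>X (Cod C f). \<alpha> (Dom C f) (actX f x) = actY f (\<alpha> (Cod C f) x))"

text \<open>Monomorphism in the presheaf category (left cancellable), tested against all
  presheaves Z whose elements live in the type 'z.\<close>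
definition is_mono_pshf_wrt :: "('o, 'm) cat \<Rightarrow> ('o \<Rightarrow> 'x set) \<Rightarrow> ('m \<Rightarrow> 'x \<Rightarrow> 'x)
    \<Rightarrow> ('o \<Rightarrow> 'y set) \<Rightarrow> ('m \<Rightarrow> 'y \<Rightarrow> 'y) \<Rightarrow> ('o \<Rightarrow> 'x \<Rightarrow> 'y) \<Rightarrow> 'z itself \<Rightarrow> bool" where
  "is_mono_pshf_wrt C X actX Y actY \<alpha> (_ :: 'z itself) \<longleftrightarrow>
     (\<forall>(Z :: 'o \<Rightarrow> 'z set) actZ \<beta> \<gamma>. is_presheaf C Z actZ \<longrightarrow>
        is_nat_trans C Z actZ X actX \<beta> \<longrightarrow> is_nat_trans C Z actZ X actX \<gamma> \<longrightarrow>
        (\<forall>a\<in>Obj C. \<forall>z\<in>Z a. \<alpha> a (\<beta> a z) = \<alpha> a (\<gamma> a z)) \<longrightarrow>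
        (\<forall>a\<in>Obj C. \<forall>z\<in>Z a. \<beta> a z = \<gamma> a z))"

definition nondegenerate :: "('o, 'm) cat \<Rightarrow> 'm set \<Rightarrow> ('o \<Rightarrow> 'x set) \<Rightarrow> ('m \<Rightarrow> 'x \<Rightarrow> 'x)
    \<Rightarrow> 'o \<Rightarrow> 'x \<Rightarrow> bool" where
  "nondegenerate C Fm X act s y \<longleftrightarrow>
     \<not> (\<exists>\<tau>\<in>Fm. Dom C \<tau> = s \<and> \<tau> \<noteq> Idm C s \<and> (\<exists>z\<in>X (Cod C \<tau>). y = act \<tau> z))"

text \<open>Elegance, with presheaves whose elements live in the type 'e.\<close>
definition elegant_wrt :: "('o, 'm) cat \<Rightarrow> 'm set \<Rightarrow> 'e itself \<Rightarrow> bool" where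
  "elegant_wrt C Fm (_ :: 'e itself) \<longleftrightarrow>
     (\<forall>(X :: 'o \<Rightarrow> 'e set) act. is_presheaf C X act \<longrightarrow>
        (\<forall>r\<in>Obj C. \<forall>x\<in>X r. \<exists>!(\<sigma>, y). \<sigma> \<in> Fm \<and> Dom C \<sigma> = r \<and> y \<in> X (Cod C \<sigma>) \<and>
            nondegenerate C Fm X act (Cod C \<sigma>) y \<and> x = act \<sigma> y))"

text \<open>is_pullback C f g f' g': the square with f : a \<rightarrow> c, g : b \<rightarrow> c,
  f' : P \<rightarrow> b (base change of f along g), g' : P \<rightarrow> a (base change of g along f),
  g f' = f g', is a pullback.\<close>
definition is_pullback :: "('o, 'm) cat \<Rightarrow> 'm \<Rightarrow> 'm \<Rightarrow> 'm \<Rightarrow> 'm \<Rightarrow> bool" where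
  "is_pullback C f g f' g' \<longleftrightarrow>
     f \<in> Arr C \<and> g \<in> Arr C \<and> f' \<in> Arr C \<and> g' \<in> Arr C \<and>
     Cod C f = Cod C g \<and> Dom C f' = Dom C g' \<and> Cod C f' = Dom C g \<and> Cod C g' = Dom C f \<and>
     Comp C g f' = Comp C f g' \<and>
     (\<forall>u\<in>Arr C. \<forall>v\<in>Arr C. Dom C u = Dom C v \<longrightarrow> Cod C u = Dom C g \<longrightarrow> Cod C v = Dom C f \<longrightarrow>
        Comp C g u = Comp C f v \<longrightarrow>
        (\<exists>!h. h \<in> Arr C \<and> Dom C h = Dom C u \<and> Cod C h = Dom C f' \<and>
              Comp C f' h = u \<and> Comp C g' h = v))"

text \<open>Category of elements: objects (a, x) with x \<in> X a; an arrow f gives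
  (Dom f, f^* x) \<rightarrow> (Cod f, x). The colimit is the set of connected components.\<close>
definition elements :: "('o, 'm) cat \<Rightarrow> ('o \<Rightarrow> 'x set) \<Rightarrow> ('o \<times> 'x) set" where
  "elements C X = Sigma (Obj C) X"

definition el_arrows :: "('o, 'm) cat \<Rightarrow> ('o \<Rightarrow> 'x set) \<Rightarrow> ('m \<Rightarrow> 'x \<Rightarrow> 'x) \<Rightarrow> (('o \<times> 'x) \<times> ('o \<times> 'x)) set" where
  "el_arrows C X act = {((Dom C f, act f x), (Cod C f, x)) | f x. f \<in> Arr C \<and> x \<in> X (Cod C f)}"

definition connected :: "('o, 'm) cat \<Rightarrow> ('o \<Rightarrow> 'x set) \<Rightarrow> ('m \<Rightarrow> 'x \<Rightarrow> 'x) \<Rightarrow> (('o \<times> 'x) \<times> ('o \<times> 'x)) set" where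
  "connected C X act = (el_arrows C X act \<union> (el_arrows C X act)\<inverse>)\<^sup>*"

definition colim :: "('o, 'm) cat \<Rightarrow> ('o \<Rightarrow> 'x set) \<Rightarrow> ('m \<Rightarrow> 'x \<Rightarrow> 'x) \<Rightarrow> ('o \<times> 'x) set set" where
  "colim C X act = elements C X // connected C X act"

definition colim_map :: "('o, 'm) cat \<Rightarrow> ('o \<Rightarrow> 'y set) \<Rightarrow> ('m \<Rightarrow> 'y \<Rightarrow> 'y) \<Rightarrow> ('o \<Rightarrow> 'x \<Rightarrow> 'y)
    \<Rightarrow> ('o \<times> 'x) set \<Rightarrow> ('o \<times> 'y) set" where
  "colim_map C Y actY \<alpha> K = connected C Y actY `` ((\<lambda>(a, x). (a, \<alpha> a x)) ` K)"

end

theory Submission imports Defs begin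

lemma catD:
  assumes "is_category C"
  shows "f \<in> Arr C \<Longrightarrow> Dom C f \<in> Obj C"
    and "f \<in> Arr C \<Longrightarrow> Cod C f \<in> Obj C"
    and "a \<in> Obj C \<Longrightarrow> Idm C a \<in> Arr C"
    and "a \<in> Obj C \<Longrightarrow> Dom C (Idm C a) = a"
    and "a \<in> Obj C \<Longrightarrow> Cod C (Idm C a) = a"
    and "f \<in> Arr C \<Longrightarrow> g \<in> Arr C \<Longrightarrow> Cod C f = Dom C g \<Longrightarrow> Comp C g f \<in> Arr C"
    and "f \<in> Arr C \<Longrightarrow> g \<in> Arr C \<Longrightarrow> Cod C f = Dom C g \<Longrightarrow> Dom C (Comp C g f) = Dom C f"
    and "f \<in> Arr C \<Longrightarrow> g \<in> Arr C \<Longrightarrow> Cod C f = Dom C g \<Longrightarrow> Cod C (Comp C g f) = Cod C g"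
    and "f \<in> Arr C \<Longrightarrow> Comp C (Idm C (Cod C f)) f = f"
    and "f \<in> Arr C \<Longrightarrow> Comp C f (Idm C (Dom C f)) = f"
    and "f \<in> Arr C \<Longrightarrow> g \<in> Arr C \<Longrightarrow> h \<in> Arr C \<Longrightarrow> Cod C f = Dom C g \<Longrightarrow> Cod C g = Dom C h \<Longrightarrow>
         Comp C h (Comp C g f) = Comp C (Comp C h g) f"
  using assms unfolding is_category_def by blast+

lemma reedyD:
  assumes "is_reedy C deg Fp Fm"
  shows "is_category C" and "Fp \<subseteq> Arr C" and "Fm \<subseteq> Arr C"
    and "a \<in> Obj C \<Longrightarrow> Idm C a \<in> Fm" and "a \<in> Obj C \<Longrightarrow> Idm C a \<in> Fp"
    and "f \<in> Fm \<Longrightarrow> g \<in> Fm \<Longrightarrow> Cod C f = Dom C g \<Longrightarrow> Comp C g f \<in> Fm"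
    and "f \<in> Fm \<Longrightarrow> f \<noteq> Idm C (Dom C f) \<Longrightarrow> deg (Cod C f) < deg (Dom C f)"
  using assms unfolding is_reedy_def wide_subcat_def by blast+

lemma reedy_fact:
  assumes "is_reedy C deg Fp Fm" "f \<in> Arr C"
  obtains s t where "s \<in> Fm" "t \<in> Fp" "Dom C s = Dom C f" "Cod C s = Dom C t"
    "Cod C t = Cod C f" "Comp C t s = f"
proof -
  from assms have "\<exists>!(s, t). s \<in> Fm \<and> t \<in> Fp \<and> Dom C s = Dom C f \<and> Cod C s = Dom C t \<and>
         Cod C t = Cod C f \<and> Comp C t s = f" unfolding is_reedy_def by blast
  then obtain p where "case p of (s, t) \<Rightarrow> s \<in> Fm \<and> t \<in> Fp \<and> Dom C s = Dom C f \<and> Cod C s = Dom C t \<and>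
         Cod C t = Cod C f \<and> Comp C t s = f" by blast
  then show ?thesis using that by (cases p) auto
qed

lemma reedy_uniq:
  assumes "is_reedy C deg Fp Fm" "f \<in> Arr C"
    "s1 \<in> Fm" "t1 \<in> Fp" "Dom C s1 = Dom C f" "Cod C s1 = Dom C t1" "Cod C t1 = Cod C f" "Comp C t1 s1 = f"
    "s2 \<in> Fm" "t2 \<in> Fp" "Dom C s2 = Dom C f" "Cod C s2 = Dom C t2" "Cod C t2 = Cod C f" "Comp C t2 s2 = f"
  shows "s1 = s2 \<and> t1 = t2"
proof -
  from assms(1,2) have "\<exists>!(s, t). s \<in> Fm \<and> t \<in> Fp \<and> Dom C s = Dom C f \<and> Cod C s = Dom C t \<and>
         Cod C t = Cod C f \<and> Comp C t s = f" unfolding is_reedy_def by blast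
  then have "(s1, t1) = (s2, t2)" using assms(3-) by (smt (verit) Ex1_def case_prod_conv)
  then show ?thesis by simp
qed

lemma psD:
  assumes "is_presheaf C X act"
  shows "f \<in> Arr C \<Longrightarrow> x \<in> X (Cod C f) \<Longrightarrow> act f x \<in> X (Dom C f)"
    and "a \<in> Obj C \<Longrightarrow> x \<in> X a \<Longrightarrow> act (Idm C a) x = x"
    and "f \<in> Arr C \<Longrightarrow> g \<in> Arr C \<Longrightarrow> Cod C f = Dom C g \<Longrightarrow> x \<in> X (Cod C g) \<Longrightarrow>
         act (Comp C g f) x = act f (act g x)"
  using assms unfolding is_presheaf_def by blast+

lemma ntD:
  assumes "is_nat_trans C X aX Y aY \<alpha>"
  shows "a \<in> Obj C \<Longrightarrow> x \<in> X a \<Longrightarrow> \<alpha> a x \<in> Y a"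
    and "f \<in> Arr C \<Longrightarrow> x \<in> X (Cod C f) \<Longrightarrow> \<alpha> (Dom C f) (aX f x) = aY f (\<alpha> (Cod C f) x)"
  using assms unfolding is_nat_trans_def by blast+

lemma deg_contra:
  assumes R: "is_reedy C deg Fp Fm" and g: "g \<in> Arr C" "Dom C g = Cod C \<tau>" "Cod C g = s"
    and \<tau>: "\<tau> \<in> Fm" "Dom C \<tau> = s" "\<tau> \<noteq> Idm C s" and eq: "Comp C g \<tau> = Idm C s"
  shows False
proof -
  note c = catD[OF reedyD(1)[OF R]]
  have \<tau>A: "\<tau> \<in> Arr C" using \<tau> reedyD(3)[OF R] by blast
  have sO: "s \<in> Obj C" using c(1)[OF \<tau>A] \<tau> by simp
  obtain d f where df: "d \<in> Fm" "f \<in> Fp" "Dom C d = Dom C g" "Cod C d = Dom C f"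
    "Cod C f = Cod C g" "Comp C f d = g" using reedy_fact[OF R g(1)] by blast
  have dA: "d \<in> Arr C" and fA: "f \<in> Arr C" using df reedyD(2,3)[OF R] by blast+
  have dt: "Comp C d \<tau> \<in> Fm" using reedyD(6)[OF R \<tau>(1) df(1)] df g by simp
  have e1: "Comp C f (Comp C d \<tau>) = Idm C s"
    using c(11)[OF \<tau>A dA fA] df g eq by simp
  have "Comp C d \<tau> = Idm C s \<and> f = Idm C s"
  proof (rule reedy_uniq[OF R c(3)[OF sO]])
    show "Comp C d \<tau> \<in> Fm" by fact
    show "f \<in> Fp" by fact
    show "Dom C (Comp C d \<tau>) = Dom C (Idm C s)" using c(7)[OF \<tau>A dA] df g \<tau> c(4)[OF sO] by simp
    show "Cod C (Comp C d \<tau>) = Dom C f" using c(8)[OF \<tau>A dA] df g by simp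
    show "Cod C f = Cod C (Idm C s)" using df g c(5)[OF sO] by simp
    show "Comp C f (Comp C d \<tau>) = Idm C s" by fact
    show "Idm C s \<in> Fm" "Idm C s \<in> Fp" using reedyD(4,5)[OF R sO] by auto
    show "Dom C (Idm C s) = Dom C (Idm C s)" by simp
    show "Cod C (Idm C s) = Dom C (Idm C s)" using c(4,5)[OF sO] by simp
    show "Cod C (Idm C s) = Cod C (Idm C s)" by simp
    show "Comp C (Idm C s) (Idm C s) = Idm C s" using c(9)[OF c(3)[OF sO]] c(5)[OF sO] by simp
  qed
  then have dt1: "Comp C d \<tau> = Idm C s" and f1: "f = Idm C s" by auto
  have codd: "Cod C d = s" using df f1 c(4)[OF sO] by simp
  have l1: "deg (Cod C \<tau>) < deg s" using reedyD(7)[OF R \<tau>(1)] \<tau> by simp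
  show False
  proof (cases "d = Idm C (Dom C d)")
    case True
    then have "Comp C d \<tau> = \<tau>" using c(9)[OF \<tau>A] df g by simp
    then show False using dt1 \<tau> by simp
  next
    case False
    then have "deg (Cod C d) < deg (Dom C d)" using reedyD(7)[OF R df(1)] by simp
    then show False using l1 codd df g by simp
  qed
qed


lemma ex1_eq: "\<exists>!x. P x \<Longrightarrow> P a \<Longrightarrow> P b \<Longrightarrow> a = b" by blast

lemma split_deg:
  fixes C :: "('o, 'm) cat"
  assumes R: "is_reedy C deg Fp Fm" and el: "elegant_wrt C Fm TYPE('m set)" and \<sigma>: "\<sigma> \<in> Fm"
  shows "\<exists>\<delta>\<in>Arr C. Dom C \<delta> = Cod C \<sigma> \<and> Cod C \<delta> = Dom C \<sigma> \<and> Comp C \<sigma> \<delta> = Idm C (Cod C \<sigma>)"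
proof (rule ccontr)
  assume nf: "\<not> ?thesis"
  note c = catD[OF reedyD(1)[OF R]]
  have \<sigma>A: "\<sigma> \<in> Arr C" using \<sigma> reedyD(3)[OF R] by blast
  define r where "r = Dom C \<sigma>"
  define s where "s = Cod C \<sigma>"
  have rO: "r \<in> Obj C" and sO: "s \<in> Obj C" using c(1,2)[OF \<sigma>A] r_def s_def by auto
  define fac where "fac g \<longleftrightarrow> (\<exists>h\<in>Arr C. Dom C h = Dom C g \<and> Cod C h = r \<and> Comp C \<sigma> h = g)" for g
  define Rg where "Rg g = (if fac g then {g} else {g, \<sigma>})" for g
  define P :: "'o \<Rightarrow> 'm set set" where "P c = {{g} | g. g \<in> Arr C \<and> Dom C g = c \<and> Cod C g = s}
      \<union> {Rg g | g. g \<in> Arr C \<and> Dom C g = c \<and> Cod C g = s}" for c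
  define act where "act f E = (if is_singleton E then {Comp C (the_elem E) f}
      else Rg (Comp C (the_elem (E - {\<sigma>})) f))" for f E
  have nfs: "\<not> fac (Idm C s)"
    using nf c(4)[OF sO] unfolding fac_def r_def s_def by auto
  have fac\<sigma>: "fac \<sigma>" unfolding fac_def r_def
    using c(3)[OF c(1)[OF \<sigma>A]] c(4,5)[OF c(1)[OF \<sigma>A]] c(10)[OF \<sigma>A] by auto
  have fac_comp: "fac (Comp C g f)" if "fac g" "f \<in> Arr C" "g \<in> Arr C" "Dom C g = Cod C f" for f g
  proof -
    have fg: "fac g" by fact
    obtain h where h: "h \<in> Arr C" "Dom C h = Dom C g" "Cod C h = r" "Comp C \<sigma> h = g"
      using fg unfolding fac_def by blast
    have "Cod C h = Dom C \<sigma>" using h r_def by simp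
    show ?thesis unfolding fac_def
      apply (rule bexI[of _ "Comp C h f"])
      using c(6,7,8)[of f h] c(7)[of f g] c(11)[of f h \<sigma>] h that \<sigma>A \<open>Cod C h = Dom C \<sigma>\<close> by auto
  qed
  have Rg_t: "Rg g = {g}" if "fac g" for g using that Rg_def by simp
  have Rg_f: "Rg g = {g, \<sigma>}" "g \<noteq> \<sigma>" if "\<not> fac g" for g using that Rg_def fac\<sigma> by auto
  have Rg_mem: "g \<in> Rg g" "Rg g \<subseteq> {g, \<sigma>}" for g unfolding Rg_def by auto
  have actL: "act f {g} = {Comp C g f}" for f g unfolding act_def by (simp add: is_singleton_def)
  have actR: "act f (Rg g) = Rg (Comp C g f)" if "f \<in> Arr C" "g \<in> Arr C" "Dom C g = Cod C f" for f g
  proof (cases "fac g")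
    case True
    then show ?thesis using Rg_t actL fac_comp that by simp
  next
    case False
    then have ns: "\<not> is_singleton {g, \<sigma>}" using Rg_f(2) by (auto simp: is_singleton_def doubleton_eq_iff)
    have "{g, \<sigma>} - {\<sigma>} = {g}" using Rg_f(2)[OF False] by auto
    then show ?thesis using Rg_f(1)[OF False] ns unfolding act_def by simp
  qed
  have Pcases: "(\<exists>g. E = {g} \<and> g \<in> Arr C \<and> Dom C g = c \<and> Cod C g = s) \<or>
                (\<exists>g. E = Rg g \<and> g \<in> Arr C \<and> Dom C g = c \<and> Cod C g = s)" if "E \<in> P c" for E c
    using that unfolding P_def by blast
  have ps: "is_presheaf C P act"
    unfolding is_presheaf_def
  proof (intro conjI ballI impI)
    fix f E assume f: "f \<in> Arr C" and E: "E \<in> P (Cod C f)"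
    from Pcases[OF E] show "act f E \<in> P (Dom C f)"
    proof
      assume "\<exists>g. E = {g} \<and> g \<in> Arr C \<and> Dom C g = Cod C f \<and> Cod C g = s"
      then obtain g where g: "E = {g}" "g \<in> Arr C" "Dom C g = Cod C f" "Cod C g = s" by blast
      show ?thesis using g actL c(6,7,8)[OF f g(2)] unfolding P_def by auto
    next
      assume "\<exists>g. E = Rg g \<and> g \<in> Arr C \<and> Dom C g = Cod C f \<and> Cod C g = s"
      then obtain g where g: "E = Rg g" "g \<in> Arr C" "Dom C g = Cod C f" "Cod C g = s" by blast
      show ?thesis using g actR[OF f g(2)] c(6,7,8)[OF f g(2)] unfolding P_def by auto
    qed
  next
    fix a E assume a: "a \<in> Obj C" and E: "E \<in> P a"
    from Pcases[OF E] show "act (Idm C a) E = E"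
    proof
      assume "\<exists>g. E = {g} \<and> g \<in> Arr C \<and> Dom C g = a \<and> Cod C g = s"
      then obtain g where g: "E = {g}" "g \<in> Arr C" "Dom C g = a" "Cod C g = s" by blast
      show ?thesis using g actL c(10)[OF g(2)] by simp
    next
      assume "\<exists>g. E = Rg g \<and> g \<in> Arr C \<and> Dom C g = a \<and> Cod C g = s"
      then obtain g where g: "E = Rg g" "g \<in> Arr C" "Dom C g = a" "Cod C g = s" by blast
      show ?thesis using g actR[OF c(3)[OF a] g(2)] c(5)[OF a] c(10)[OF g(2)] by simp
    qed
  next
    fix f g E assume f: "f \<in> Arr C" and g: "g \<in> Arr C" and fg: "Cod C f = Dom C g"
      and E: "E \<in> P (Cod C g)"
    from Pcases[OF E] show "act (Comp C g f) E = act f (act g E)"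
    proof
      assume "\<exists>k. E = {k} \<and> k \<in> Arr C \<and> Dom C k = Cod C g \<and> Cod C k = s"
      then obtain k where k: "E = {k}" "k \<in> Arr C" "Dom C k = Cod C g" "Cod C k = s" by blast
      show ?thesis using k actL c(11)[OF f g k(2) fg] by simp
    next
      assume "\<exists>k. E = Rg k \<and> k \<in> Arr C \<and> Dom C k = Cod C g \<and> Cod C k = s"
      then obtain k where k: "E = Rg k" "k \<in> Arr C" "Dom C k = Cod C g" "Cod C k = s" by blast
      have "act (Comp C g f) E = Rg (Comp C k (Comp C g f))"
        using k actR[OF c(6)[OF f g fg] k(2)] c(8)[OF f g fg] by simp
      moreover have "act f (act g E) = Rg (Comp C (Comp C k g) f)"
        using k actR[OF g k(2)] actR[OF f c(6)[OF g k(2)]] c(7)[OF g k(2)] fg by simp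
      ultimately show ?thesis using c(11)[OF f g k(2) fg] k by simp
    qed
  qed
  have ndg: "nondegenerate C Fm P act s E" if "Idm C s \<in> E" for E
    unfolding nondegenerate_def
  proof
    assume "\<exists>\<tau>\<in>Fm. Dom C \<tau> = s \<and> \<tau> \<noteq> Idm C s \<and> (\<exists>z\<in>P (Cod C \<tau>). E = act \<tau> z)"
    then obtain \<tau> z where \<tau>: "\<tau> \<in> Fm" "Dom C \<tau> = s" "\<tau> \<noteq> Idm C s" and z: "z \<in> P (Cod C \<tau>)" "E = act \<tau> z"
      by blast
    have \<tau>A: "\<tau> \<in> Arr C" using \<tau> reedyD(3)[OF R] by blast
    from Pcases[OF z(1)] show False
    proof
      assume "\<exists>g. z = {g} \<and> g \<in> Arr C \<and> Dom C g = Cod C \<tau> \<and> Cod C g = s"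
      then obtain g where g: "z = {g}" "g \<in> Arr C" "Dom C g = Cod C \<tau>" "Cod C g = s" by blast
      have "Comp C g \<tau> = Idm C s" using z g actL that by simp
      then show False using deg_contra[OF R g(2,3,4) \<tau>] by simp
    next
      assume "\<exists>g. z = Rg g \<and> g \<in> Arr C \<and> Dom C g = Cod C \<tau> \<and> Cod C g = s"
      then obtain g where g: "z = Rg g" "g \<in> Arr C" "Dom C g = Cod C \<tau>" "Cod C g = s" by blast
      have "E = Rg (Comp C g \<tau>)" using z g actR[OF \<tau>A g(2)] by simp
      then have "Idm C s = Comp C g \<tau> \<or> Idm C s = \<sigma>" using Rg_mem(2) that by blast
      moreover have "Idm C s \<noteq> \<sigma>" using nfs fac\<sigma> by auto
      ultimately show False using deg_contra[OF R g(2,3,4) \<tau>] by simp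
    qed
  qed
  have L: "{Idm C s} \<in> P s" and Rid: "Rg (Idm C s) \<in> P s"
    unfolding P_def using c(3,4,5)[OF sO] by blast+
  have sigP: "{\<sigma>} \<in> P r" unfolding P_def using \<sigma>A r_def s_def by blast
  have a1: "act \<sigma> {Idm C s} = {\<sigma>}" using actL c(9)[OF \<sigma>A] s_def by simp
  have a2: "act \<sigma> (Rg (Idm C s)) = {\<sigma>}"
    using actR[OF \<sigma>A c(3)[OF sO]] c(4)[OF sO] c(9)[OF \<sigma>A] s_def Rg_t[OF fac\<sigma>] by simp
  have ex: "\<exists>!(\<tau>, y). \<tau> \<in> Fm \<and> Dom C \<tau> = r \<and> y \<in> P (Cod C \<tau>) \<and>
            nondegenerate C Fm P act (Cod C \<tau>) y \<and> {\<sigma>} = act \<tau> y"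
    using el[unfolded elegant_wrt_def, rule_format, OF ps rO sigP] .
  have "(\<sigma>, {Idm C s}) = (\<sigma>, Rg (Idm C s))"
  proof (rule ex1_eq[OF ex])
    show "case (\<sigma>, {Idm C s}) of (\<tau>, y) \<Rightarrow> \<tau> \<in> Fm \<and> Dom C \<tau> = r \<and> y \<in> P (Cod C \<tau>) \<and>
            nondegenerate C Fm P act (Cod C \<tau>) y \<and> {\<sigma>} = act \<tau> y"
      using \<sigma> r_def s_def L ndg a1 by simp
    show "case (\<sigma>, Rg (Idm C s)) of (\<tau>, y) \<Rightarrow> \<tau> \<in> Fm \<and> Dom C \<tau> = r \<and> y \<in> P (Cod C \<tau>) \<and>
            nondegenerate C Fm P act (Cod C \<tau>) y \<and> {\<sigma>} = act \<tau> y"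
      using \<sigma> r_def s_def Rid ndg Rg_mem a2 by simp
  qed
  then have "{Idm C s} = {Idm C s, \<sigma>}" using Rg_f(1)[OF nfs] by simp
  moreover have "Idm C s \<noteq> \<sigma>" using nfs fac\<sigma> by auto
  ultimately show False by auto
qed


theorem mainTheorem7:
  fixes C :: "('o, 'm) cat" and deg :: "'o \<Rightarrow> 'd::wellorder"
    and Fp Fm :: "'m set"
  assumes reedy: "is_reedy C deg Fp Fm"
    and elegant: "elegant_wrt C Fm TYPE('m set)"
    and elegant_x: "elegant_wrt C Fm TYPE('x)"
    and elegant_y: "elegant_wrt C Fm TYPE('y)"
    and pb: "\<And>f g. f \<in> Fp \<Longrightarrow> g \<in> Arr C \<Longrightarrow> Cod C g = Cod C f \<Longrightarrow>
             \<exists>f' g'. is_pullback C f g f' g' \<and> f' \<in> Fp \<and>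
                     (g \<in> Fp \<longrightarrow> g' \<in> Fp) \<and> (g \<in> Fm \<longrightarrow> g' \<in> Fm)"
  shows "\<And>(X :: 'o \<Rightarrow> 'x set) actX (Y :: 'o \<Rightarrow> 'y set) actY \<alpha>.
           is_presheaf C X actX \<Longrightarrow> is_presheaf C Y actY \<Longrightarrow>
           is_nat_trans C X actX Y actY \<alpha> \<Longrightarrow>
           is_mono_pshf_wrt C X actX Y actY \<alpha> TYPE('x \<times> 'x) \<Longrightarrow>
           inj_on (colim_map C Y actY \<alpha>) (colim C X actX)"
proof -
  fix X :: "'o \<Rightarrow> 'x set" and actX and Y :: "'o \<Rightarrow> 'y set" and actY \<alpha>
  assume psX: "is_presheaf C X actX" and psY: "is_presheaf C Y actY"
    and nt: "is_nat_trans C X actX Y actY \<alpha>"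
    and mono: "is_mono_pshf_wrt C X actX Y actY \<alpha> TYPE('x \<times> 'x)"
  note c = catD[OF reedyD(1)[OF reedy]]
  note pX = psD[OF psX] and pY = psD[OF psY] and n = ntD[OF nt]
  define Z :: "'o \<Rightarrow> ('x \<times> 'x) set" where "Z a = {(x1, x2). x1 \<in> X a \<and> x2 \<in> X a \<and> \<alpha> a x1 = \<alpha> a x2}" for a
  define actZ where "actZ f p = (actX f (fst p), actX f (snd p))" for f p
  have psZ: "is_presheaf C Z actZ" unfolding is_presheaf_def
  proof (intro conjI ballI impI)
    fix f p assume f: "f \<in> Arr C" and p: "p \<in> Z (Cod C f)"
    then show "actZ f p \<in> Z (Dom C f)" using pX(1)[OF f] n(2)[OF f]
      unfolding Z_def actZ_def by auto
  next
    fix a p assume "a \<in> Obj C" "p \<in> Z a"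
    then show "actZ (Idm C a) p = p" using pX(2) unfolding Z_def actZ_def by auto
  next
    fix f g p assume "f \<in> Arr C" "g \<in> Arr C" "Cod C f = Dom C g" "p \<in> Z (Cod C g)"
    then show "actZ (Comp C g f) p = actZ f (actZ g p)" using pX(3) unfolding Z_def actZ_def by auto
  qed
  have ntb: "is_nat_trans C Z actZ X actX (\<lambda>a. fst)" and ntc: "is_nat_trans C Z actZ X actX (\<lambda>a. snd)"
    unfolding is_nat_trans_def Z_def actZ_def by auto
  have inj: "x1 = x2" if "a \<in> Obj C" "x1 \<in> X a" "x2 \<in> X a" "\<alpha> a x1 = \<alpha> a x2" for a x1 x2
  proof -
    have "\<forall>a\<in>Obj C. \<forall>z\<in>Z a. fst z = snd z"
      using mono[unfolded is_mono_pshf_wrt_def, rule_format, OF psZ ntb ntc] unfolding Z_def by auto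
    then show ?thesis using that unfolding Z_def by auto
  qed
  define RX where "RX = el_arrows C X actX"
  define RY where "RY = el_arrows C Y actY"
  define conX where "conX = connected C X actX"
  define conY where "conY = connected C Y actY"
  have conX_eq: "conX = (RX \<union> RX\<inverse>)\<^sup>*" unfolding conX_def RX_def connected_def ..
  have conY_eq: "conY = (RY \<union> RY\<inverse>)\<^sup>*" unfolding conY_def RY_def connected_def ..
  have RXI: "((Dom C f, actX f x), (Cod C f, x)) \<in> RX" if "f \<in> Arr C" "x \<in> X (Cod C f)" for f x
    using that unfolding RX_def el_arrows_def by blast
  define Good where "Good e q \<longleftrightarrow> (\<exists>f. f \<in> Arr C \<and> Dom C f = fst q \<and> Cod C f = fst e \<and>
      snd q \<in> X (fst q) \<and> snd e \<in> Y (fst e) \<and> actY f (snd e) = \<alpha> (fst q) (snd q))" for e q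
  have stp: "\<exists>q2. Good e2 q2 \<and> (q1, q2) \<in> conX" if G: "Good e1 q1" and E: "(e1, e2) \<in> RY \<union> RY\<inverse>"
    for e1 e2 q1
  proof -
    obtain f where f: "f \<in> Arr C" "Dom C f = fst q1" "Cod C f = fst e1" "snd q1 \<in> X (fst q1)"
      "snd e1 \<in> Y (fst e1)" "actY f (snd e1) = \<alpha> (fst q1) (snd q1)" using G unfolding Good_def by blast
    from E show ?thesis
    proof
      assume "(e1, e2) \<in> RY"
      then obtain h z where h: "h \<in> Arr C" "z \<in> Y (Cod C h)" "e1 = (Dom C h, actY h z)" "e2 = (Cod C h, z)"
        unfolding RY_def el_arrows_def by blast
      have "Good e2 q1" unfolding Good_def
        apply (rule exI[of _ "Comp C h f"])
        using c(6,7,8)[OF f(1) h(1)] pY(3)[OF f(1) h(1)] f h by auto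
      then show ?thesis unfolding conX_eq by blast
    next
      assume "(e1, e2) \<in> RY\<inverse>"
      then obtain h y where h: "h \<in> Arr C" "y \<in> Y (Cod C h)" "e2 = (Dom C h, actY h y)" "e1 = (Cod C h, y)"
        unfolding RY_def el_arrows_def by blast
      obtain s t where st: "s \<in> Fm" "t \<in> Fp" "Dom C s = Dom C f" "Cod C s = Dom C t"
        "Cod C t = Cod C f" "Comp C t s = f" using reedy_fact[OF reedy f(1)] by blast
      have sA: "s \<in> Arr C" and tA: "t \<in> Arr C" using st reedyD(2,3)[OF reedy] by blast+
      obtain a x where q1: "q1 = (a, x)" by (cases q1)
      define w where "w = actY t y"
      have yt: "y \<in> Y (Cod C t)" using st f h by simp
      have wY: "w \<in> Y (Cod C s)" using pY(1)[OF tA yt] st w_def by simp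
      have sw: "actY s w = \<alpha> a x" using pY(3)[OF sA tA st(4) yt] st f h w_def q1 by simp
      obtain \<delta> where \<delta>: "\<delta> \<in> Arr C" "Dom C \<delta> = Cod C s" "Cod C \<delta> = Dom C s"
        "Comp C s \<delta> = Idm C (Cod C s)" using split_deg[OF reedy elegant st(1)] by blast
      have xX: "x \<in> X a" using f q1 by simp
      have aO: "a \<in> Obj C" using c(1)[OF f(1)] f q1 by simp
      define x1 where "x1 = actX \<delta> x"
      have x1X: "x1 \<in> X (Cod C s)" using pX(1)[OF \<delta>(1)] \<delta> st f xX q1 x1_def by simp
      have "\<alpha> (Cod C s) x1 = actY \<delta> (\<alpha> a x)"
        using n(2)[OF \<delta>(1)] \<delta> st f xX q1 x1_def by simp
      also have "\<dots> = actY (Comp C s \<delta>) w" using pY(3)[OF \<delta>(1) sA] \<delta> wY sw by simp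
      also have "\<dots> = w" using pY(2)[OF c(2)[OF sA] wY] \<delta> by simp
      finally have ax1: "\<alpha> (Cod C s) x1 = w" .
      have "\<alpha> a (actX s x1) = \<alpha> a x" using n(2)[OF sA x1X] ax1 sw st f q1 by simp
      then have sx1: "actX s x1 = x"
        using inj[OF aO _ xX] pX(1)[OF sA x1X] st f q1 by simp
      have r1: "(q1, (Cod C s, x1)) \<in> RX" using RXI[OF sA x1X] sx1 st f q1 by simp
      have "Cod C h = Cod C t" using st f h by simp
      then obtain f' g' where P: "is_pullback C t h f' g'" using pb[OF st(2) h(1)] by blast
      then have P': "f' \<in> Arr C" "g' \<in> Arr C" "Dom C f' = Dom C g'" "Cod C f' = Dom C h"
        "Cod C g' = Dom C t" "Comp C h f' = Comp C t g'" unfolding is_pullback_def by auto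
      define x2 where "x2 = actX g' x1"
      have x1g: "x1 \<in> X (Cod C g')" using x1X P' st by simp
      have r2: "((Dom C g', x2), (Cod C s, x1)) \<in> RX" using RXI[OF P'(2) x1g] P' st x2_def by simp
      have "Good e2 (Dom C g', x2)" unfolding Good_def
      proof (rule exI[of _ f'], intro conjI)
        show "f' \<in> Arr C" "Dom C f' = fst (Dom C g', x2)" "Cod C f' = fst e2" using P' h by auto
        show "snd (Dom C g', x2) \<in> X (fst (Dom C g', x2))" using pX(1)[OF P'(2) x1g] x2_def by simp
        show "snd e2 \<in> Y (fst e2)" using pY(1)[OF h(1,2)] h by simp
        have "actY f' (snd e2) = actY (Comp C h f') y" using pY(3)[OF P'(1) h(1) P'(4) h(2)] h by simp
        also have "\<dots> = actY (Comp C t g') y" using P' by simp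
        also have "\<dots> = actY g' w" using pY(3)[OF P'(2) tA P'(5) yt] w_def by simp
        also have "\<dots> = \<alpha> (Dom C g') x2" using n(2)[OF P'(2) x1g] ax1 P' st x2_def by simp
        finally show "actY f' (snd e2) = \<alpha> (fst (Dom C g', x2)) (snd (Dom C g', x2))" by simp
      qed
      moreover have "(q1, (Dom C g', x2)) \<in> conX" unfolding conX_eq
        using r1 r2 by (meson UnI1 UnI2 converse_iff r_into_rtrancl rtrancl_trans)
      ultimately show ?thesis by blast
    qed
  qed
  have path: "\<exists>q'. Good e' q' \<and> (q, q') \<in> conX" if G: "Good e q" and ce: "(e, e') \<in> conY"
    for e e' q
    using ce[unfolded conY_eq]
  proof (induction rule: rtrancl_induct)
    case base
    show ?case using G unfolding conX_eq by blast
  next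
    case (step e1 e2)
    then obtain q1 where q1: "Good e1 q1" "(q, q1) \<in> conX" by blast
    then obtain q2 where q2: "Good e2 q2" "(q1, q2) \<in> conX" using stp step.hyps(2) by blast
    then show ?case using q1(2) unfolding conX_eq by (meson rtrancl_trans)
  qed
  have elem_cl: "q \<in> elements C X" if pq: "(p, q) \<in> conX" and pe: "p \<in> elements C X" for p q
    using pq[unfolded conX_eq] pe
  proof (induction rule: rtrancl_induct)
    case base
    then show ?case .
  next
    case (step q1 q2)
    then show ?case unfolding RX_def el_arrows_def elements_def
      using pX(1) c(1,2) by auto
  qed
  have equivX: "equiv UNIV conX" unfolding equiv_def conX_eq
    using refl_rtrancl sym_rtrancl[OF sym_Un_converse] trans_rtrancl by auto
  define am where "am = (\<lambda>(a::'o, x). (a, \<alpha> a x))"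
  have cm: "colim_map C Y actY \<alpha> K = conY `` (am ` K)" for K unfolding colim_map_def conY_def am_def ..
  show "inj_on (colim_map C Y actY \<alpha>) (colim C X actX)"
    unfolding inj_on_def colim_def
  proof (intro ballI impI)
    fix K1 K2 assume K1: "K1 \<in> elements C X // connected C X actX"
      and K2: "K2 \<in> elements C X // connected C X actX"
      and eq: "colim_map C Y actY \<alpha> K1 = colim_map C Y actY \<alpha> K2"
    obtain p1 where p1: "p1 \<in> elements C X" "K1 = conX `` {p1}" using K1 unfolding conX_def
      by (auto elim: quotientE)
    obtain p2 where p2: "p2 \<in> elements C X" "K2 = conX `` {p2}" using K2 unfolding conX_def
      by (auto elim: quotientE)
    have "p1 \<in> K1" using p1 unfolding conX_eq by simp
    then have "am p1 \<in> colim_map C Y actY \<alpha> K1" unfolding cm conY_eq by blast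
    then have "am p1 \<in> conY `` (am ` K2)" using eq cm by simp
    then obtain q where q: "q \<in> K2" "(am q, am p1) \<in> conY" by blast
    have p2q: "(p2, q) \<in> conX" using q p2 by simp
    have "q \<in> elements C X" using elem_cl[OF p2q p2(1)] .
    then obtain a x where qax: "q = (a, x)" "a \<in> Obj C" "x \<in> X a" unfolding elements_def by blast
    obtain a1 x1 where p1ax: "p1 = (a1, x1)" "a1 \<in> Obj C" "x1 \<in> X a1"
      using p1(1) unfolding elements_def by blast
    have "Good (am q) q" unfolding Good_def
      apply (rule exI[of _ "Idm C a"])
      using qax c(3,4,5)[OF qax(2)] n(1)[OF qax(2,3)] pY(2)[OF qax(2) n(1)[OF qax(2,3)]]
      unfolding am_def by simp
    then obtain q' where q': "Good (am p1) q'" "(q, q') \<in> conX" using path q(2) by blast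
    then obtain f where f: "f \<in> Arr C" "Dom C f = fst q'" "Cod C f = a1" "snd q' \<in> X (fst q')"
      "actY f (\<alpha> a1 x1) = \<alpha> (fst q') (snd q')" unfolding Good_def am_def p1ax(1) by auto
    have x1c: "x1 \<in> X (Cod C f)" using f p1ax by simp
    have "\<alpha> (fst q') (actX f x1) = \<alpha> (fst q') (snd q')" using n(2)[OF f(1) x1c] f by simp
    then have "actX f x1 = snd q'" using inj[OF _ _ f(4)] c(1)[OF f(1)] pX(1)[OF f(1) x1c] f by simp
    then have "(q', p1) \<in> RX" using RXI[OF f(1) x1c] f p1ax by simp
    then have "(q', p1) \<in> conX" unfolding conX_eq by blast
    then have "(p2, p1) \<in> conX" using p2q q'(2) unfolding conX_eq by (meson rtrancl_trans)
    then show "K1 = K2" using p1 p2 equiv_class_eq_iff[OF equivX] by metis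
  qed
qed

end
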